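(* Every compact $\ell_1$-convex subset of $\mathbb{R}^n$ is Jordan measurable.
   Context: A subset $Z\subseteq\mathbb{R}^n$ is $\ell_1$-convex if for all $z,z'\in Z$, with $D=\sum_i|z_i-z'_i|$, there is $\gamma\colon[0,D]\to Z$ with $\gamma(0)=z,\gamma(D)=z'$ and $\sum_i|\gamma_i(t)-\gamma_i(t')|=|t-t'|$ for all $t,t'$. *)

theory Defs
  imports "HOL-Analysis.Analysis"
begin

definition l1_dist :: "real^'n \<Rightarrow> real^'n \<Rightarrow> real" where
  "l1_dist z z' = (\<Sum>i\<in>UNIV. \<bar>z $ i - z' $ i\<bar>)"

definition l1_convex :: "(real^'n) set \<Rightarrow> bool" where
  "l1_convex Z \<longleftrightarrow>
     (\<forall>z\<in>Z. \<forall>z'\<in>Z. \<exists>\<gamma> :: real \<Rightarrow> real^'n.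
        \<gamma> ` {0..l1_dist z z'} \<subseteq> Z \<and> \<gamma> 0 = z \<and> \<gamma> (l1_dist z z') = z' \<and>
        (\<forall>t\<in>{0..l1_dist z z'}. \<forall>t'\<in>{0..l1_dist z z'}.
            l1_dist (\<gamma> t) (\<gamma> t') = \<bar>t - t'\<bar>))"

definition jordan_measurable :: "'a::euclidean_space set \<Rightarrow> bool" where
  "jordan_measurable S \<longleftrightarrow> bounded S \<and> negligible (frontier S)"

end

theory Submission
  imports Defs
begin

lemma l1_tri: "l1_dist a c \<le> l1_dist a b + l1_dist b c"
  unfolding l1_dist_def sum.distrib[symmetric]
  by (intro sum_mono) arith

lemma l1_comp_le: "\<bar>a $ i - b $ i\<bar> \<le> l1_dist a b"
  unfolding l1_dist_def by (rule member_le_sum) auto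

lemma l1_between:
  assumes "l1_dist z y + l1_dist y z' = l1_dist z z'"
  shows "min (z$i) (z'$i) \<le> y$i \<and> y$i \<le> max (z$i) (z'$i)"
proof -
  have "(\<Sum>k\<in>UNIV. \<bar>z$k - y$k\<bar> + \<bar>y$k - z'$k\<bar> - \<bar>z$k - z'$k\<bar>) = 0"
    using assms unfolding l1_dist_def sum.distrib sum_subtractf by simp
  moreover have "\<forall>k\<in>UNIV. 0 \<le> \<bar>z$k - y$k\<bar> + \<bar>y$k - z'$k\<bar> - \<bar>z$k - z'$k\<bar>" by auto
  ultimately have "\<forall>k\<in>UNIV. \<bar>z$k - y$k\<bar> + \<bar>y$k - z'$k\<bar> - \<bar>z$k - z'$k\<bar> = 0"
    by (subst (asm) sum_nonneg_eq_0_iff) auto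
  then have "\<bar>z$i - y$i\<bar> + \<bar>y$i - z'$i\<bar> - \<bar>z$i - z'$i\<bar> = 0" by simp
  then show ?thesis by arith
qed

lemma geod_between:
  assumes g0: "\<gamma> 0 = z" and gD: "\<gamma> (l1_dist z z') = z'"
    and iso: "\<forall>t\<in>{0..l1_dist z z'}. \<forall>t'\<in>{0..l1_dist z z'}. l1_dist (\<gamma> t) (\<gamma> t') = \<bar>t - t'\<bar>"
    and t: "t \<in> {0..l1_dist z z'}"
  shows "min (z$i) (z'$i) \<le> \<gamma> t $i \<and> \<gamma> t $i \<le> max (z$i) (z'$i)"
proof (rule l1_between)
  have D: "0 \<le> l1_dist z z'" using t by simp
  have "l1_dist z (\<gamma> t) = t" using iso[rule_format, of 0 t] t D g0 by auto
  moreover have "l1_dist (\<gamma> t) z' = l1_dist z z' - t" using iso[rule_format, of t "l1_dist z z'"] t D gD by auto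
  ultimately show "l1_dist z (\<gamma> t) + l1_dist (\<gamma> t) z' = l1_dist z z'" by simp
qed

lemma geod_cont:
  assumes iso: "\<forall>t\<in>S. \<forall>t'\<in>S. l1_dist (\<gamma> t) (\<gamma> t') = \<bar>t - t'\<bar>"
  shows "continuous_on S (\<lambda>t. \<gamma> t $ j)"
  unfolding continuous_on_iff
proof (intro ballI allI impI)
  fix x e assume x: "x \<in> S" and e: "(0::real) < e"
  show "\<exists>d>0. \<forall>x'\<in>S. dist x' x < d \<longrightarrow> dist (\<gamma> x' $ j) (\<gamma> x $ j) < e"
  proof (intro exI[of _ e] conjI ballI impI)
    fix x' assume "x' \<in> S" "dist x' x < e"
    then show "dist (\<gamma> x' $ j) (\<gamma> x $ j) < e"
      using l1_comp_le[of "\<gamma> x'" j "\<gamma> x"] iso x by (auto simp: dist_real_def)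
  qed (use e in auto)
qed


definition orth :: "('n \<Rightarrow> bool) \<Rightarrow> real \<Rightarrow> real^'n \<Rightarrow> real^'n \<Rightarrow> bool" where
  "orth \<tau> e x y \<longleftrightarrow> (\<forall>i. if \<tau> i then e \<le> y$i - x$i else y$i - x$i \<le> -e)"

lemma fill:
  fixes Z :: "(real^'n) set"
  assumes lc: "l1_convex Z" and e: "e > 0"
    and P: "\<forall>\<tau>. \<exists>y\<in>Z. orth \<tau> e x y"
    and J: "finite J"
  shows "\<forall>q. (\<forall>i\<in>J. \<bar>q$i - x$i\<bar> \<le> e) \<longrightarrow> (\<forall>\<tau>. \<exists>y\<in>Z. (\<forall>i\<in>J. y$i = q$i) \<and>
          (\<forall>i. i \<notin> J \<longrightarrow> (if \<tau> i then e \<le> y$i - x$i else y$i - x$i \<le> -e)))"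
  using J
proof (induction J rule: finite_induct)
  case empty
  then show ?case using P unfolding orth_def by auto
next
  case (insert j J)
  show ?case
  proof (intro allI impI)
    fix q :: "real^'n" and \<tau> :: "'n \<Rightarrow> bool"
    assume q: "\<forall>i\<in>insert j J. \<bar>q$i - x$i\<bar> \<le> e"
    obtain y1 where y1: "y1 \<in> Z" "\<forall>i\<in>J. y1$i = q$i"
      "\<forall>i. i \<notin> J \<longrightarrow> (if (\<tau>(j:=True)) i then e \<le> y1$i - x$i else y1$i - x$i \<le> -e)"
      using insert.IH q by blast
    obtain y2 where y2: "y2 \<in> Z" "\<forall>i\<in>J. y2$i = q$i"
      "\<forall>i. i \<notin> J \<longrightarrow> (if (\<tau>(j:=False)) i then e \<le> y2$i - x$i else y2$i - x$i \<le> -e)"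
      using insert.IH q by blast
    define D where "D = l1_dist y1 y2"
    obtain \<gamma> where g: "\<gamma> ` {0..D} \<subseteq> Z" "\<gamma> 0 = y1" "\<gamma> D = y2"
      "\<forall>t\<in>{0..D}. \<forall>t'\<in>{0..D}. l1_dist (\<gamma> t) (\<gamma> t') = \<bar>t - t'\<bar>"
      using lc y1(1) y2(1) unfolding l1_convex_def D_def by blast
    have D0: "0 \<le> D" unfolding D_def l1_dist_def by (auto intro: sum_nonneg)
    have j1: "e \<le> y1$j - x$j" using y1(3) insert.hyps(2) by force
    have j2: "y2$j - x$j \<le> -e" using y2(3) insert.hyps(2) by force
    have qj: "\<bar>q$j - x$j\<bar> \<le> e" using q by auto
    have "\<exists>t. 0 \<le> t \<and> t \<le> D \<and> \<gamma> t $ j = q $ j"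
    proof (rule IVT2')
      show "\<gamma> D $ j \<le> q $ j" using g(3) j2 qj by auto
      show "q $ j \<le> \<gamma> 0 $ j" using g(2) j1 qj by auto
      show "continuous_on {0..D} (\<lambda>t. \<gamma> t $ j)" by (rule geod_cont) (use g(4) in blast)
    qed (rule D0)
    then obtain t where t: "t \<in> {0..D}" "\<gamma> t $ j = q $ j" by auto
    have btw: "min (y1$i) (y2$i) \<le> \<gamma> t $i \<and> \<gamma> t $i \<le> max (y1$i) (y2$i)" for i
      by (rule geod_between[of \<gamma> y1 y2]) (use g t D_def in auto)
    show "\<exists>y\<in>Z. (\<forall>i\<in>insert j J. y$i = q$i) \<and>
          (\<forall>i. i \<notin> insert j J \<longrightarrow> (if \<tau> i then e \<le> y$i - x$i else y$i - x$i \<le> -e))"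
    proof (intro bexI[of _ "\<gamma> t"] conjI allI impI ballI)
      show "\<gamma> t \<in> Z" using g(1) t by auto
      fix i assume "i \<in> insert j J"
      then show "\<gamma> t $ i = q $ i"
      proof
        assume "i \<in> J" then show ?thesis using btw[of i] y1(2) y2(2) by auto
      qed (use t in auto)
    next
      fix i assume i: "i \<notin> insert j J"
      then have "i \<notin> J" "i \<noteq> j" by auto
      then show "if \<tau> i then e \<le> \<gamma> t $ i - x $ i else \<gamma> t $ i - x $ i \<le> - e"
        using y1(3)[rule_format, of i] y2(3)[rule_format, of i] btw[of i]
        by (auto split: if_splits)
    qed
  qed
qed

lemma fill_ball:
  fixes Z :: "(real^'n) set"
  assumes lc: "l1_convex Z" and e: "e > 0"
    and P: "\<forall>\<tau>. \<exists>y\<in>Z. orth \<tau> e x y"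
  shows "ball x e \<subseteq> Z"
proof
  fix q assume "q \<in> ball x e"
  then have "\<forall>i\<in>UNIV. \<bar>q$i - x$i\<bar> \<le> e"
    using component_le_norm_cart[of "q - x"] by (auto simp: dist_norm norm_minus_commute) (meson less_imp_le order_trans)
  then obtain y where "y \<in> Z" "\<forall>i\<in>UNIV. y$i = q$i"
    using fill[OF lc e P, of UNIV] by (simp only: finite_class.finite_UNIV) blast
  then show "q \<in> Z" by (metis vec_eq_iff UNIV_I)
qed


definition anti :: "(real^'n) set \<Rightarrow> ('n \<Rightarrow> bool) \<Rightarrow> (real^'n) set" where
  "anti Z \<sigma> = {x\<in>Z. \<not> (\<exists>y\<in>Z. \<forall>i. if \<sigma> i then 0 < y$i - x$i else y$i - x$i < 0)}"

lemma frontier_sub_anti: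
  fixes Z :: "(real^'n) set"
  assumes "compact Z" "l1_convex Z"
  shows "frontier Z \<subseteq> (\<Union>\<sigma>. anti Z \<sigma>)"
proof
  fix x assume xf: "x \<in> frontier Z"
  have xZ: "x \<in> Z" using xf assms(1) compact_imp_closed frontier_subset_closed by blast
  show "x \<in> (\<Union>\<sigma>. anti Z \<sigma>)"
  proof (rule ccontr)
    assume "x \<notin> (\<Union>\<sigma>. anti Z \<sigma>)"
    then have "\<forall>\<sigma>. \<exists>y\<in>Z. \<forall>i. if \<sigma> i then 0 < y$i - x$i else y$i - x$i < 0"
      using xZ unfolding anti_def by auto
    then obtain p where p: "\<And>\<sigma>. p \<sigma> \<in> Z" "\<And>\<sigma> i. if \<sigma> i then 0 < p \<sigma> $i - x$i else p \<sigma> $i - x$i < 0"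
      by metis
    define e where "e = Min ((\<lambda>(\<sigma>,i). \<bar>p \<sigma> $ i - x $ i\<bar>) ` UNIV)"
    have fin: "finite ((\<lambda>(\<sigma>,i). \<bar>p \<sigma> $ i - x $ i\<bar>) ` (UNIV :: (('n \<Rightarrow> bool) \<times> 'n) set))"
      by simp
    have pos: "\<bar>p \<sigma> $ i - x $ i\<bar> > 0" for \<sigma> i
      using p(2)[of \<sigma> i] by (auto split: if_splits)
    have e0: "e > 0" unfolding e_def using fin pos by (subst Min_gr_iff) auto
    have ele: "e \<le> \<bar>p \<sigma> $ i - x $ i\<bar>" for \<sigma> i
      unfolding e_def using fin by (intro Min_le) auto
    have "\<forall>\<tau>. \<exists>y\<in>Z. orth \<tau> e x y"
    proof
      fix \<tau> show "\<exists>y\<in>Z. orth \<tau> e x y"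
      proof (intro bexI[of _ "p \<tau>"])
        show "orth \<tau> e x (p \<tau>)" unfolding orth_def
          using p(2)[of \<tau>] ele[of \<tau>] by (auto split: if_splits) (smt (verit))+
      qed (rule p(1))
    qed
    then have "ball x e \<subseteq> Z" by (rule fill_ball[OF assms(2) e0])
    then have "x \<in> interior Z" using e0 by (meson centre_in_ball interior_maximal open_ball subsetD)
    then show False using xf by (simp add: frontier_def)
  qed
qed


lemma anti_closed:
  fixes Z :: "(real^'n) set"
  assumes "closed Z"
  shows "closed (anti Z \<sigma>)"
proof -
  have eq: "anti Z \<sigma> = Z \<inter> (\<Inter>y\<in>Z. \<Union>i. if \<sigma> i then {x. y$i \<le> x$i} else {x. x$i \<le> y$i})"
    unfolding anti_def by (auto split: if_splits) (metis not_less)+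
  have c1: "closed {x::real^'n. y$i \<le> x$i}" for y i
    by (auto intro!: closed_Collect_le continuous_intros)
  have c2: "closed {x::real^'n. x$i \<le> y$i}" for y i
    by (auto intro!: closed_Collect_le continuous_intros)
  show ?thesis unfolding eq
    by (intro closed_Int assms closed_INT ballI closed_Union) (auto intro: c1 c2)
qed

lemma anti_disj:
  fixes Z :: "(real^'n) set"
  assumes a: "a \<in> anti Z \<sigma>" and b: "b \<in> anti Z \<sigma>" and t: "t > 0"
  shows "b \<noteq> a + t *\<^sub>R (\<chi> i. if \<sigma> i then 1 else -1)"
proof
  assume eq: "b = a + t *\<^sub>R (\<chi> i. if \<sigma> i then 1 else -1)"
  have "b \<in> Z" using b unfolding anti_def by auto
  moreover have "\<forall>i. if \<sigma> i then 0 < b$i - a$i else b$i - a$i < 0"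
    using t by (auto simp: eq)
  ultimately show False using a unfolding anti_def by blast
qed

lemma anti_negl:
  fixes Z :: "(real^'n) set"
  assumes "compact Z"
  shows "negligible (anti Z \<sigma>)"
proof -
  define A where "A = anti Z \<sigma>"
  define v :: "real^'n" where "v = (\<chi> i. if \<sigma> i then 1 else -1)"
  have "anti Z \<sigma> \<subseteq> Z" unfolding anti_def by auto
  then have cA: "compact A" unfolding A_def
    using assms anti_closed[of Z \<sigma>] compact_imp_closed
    by (metis compact_Int_closed inf.absorb_iff2)
  then have mA: "A \<in> lmeasurable" by (rule lmeasurable_compact)
  define B where "B = (\<lambda>p. snd p + fst p *\<^sub>R v) ` ({0..1::real} \<times> A)"
  have cB: "compact B" unfolding B_def
    by (intro compact_continuous_image compact_Times cA compact_Icc continuous_intros)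
  then have mB: "B \<in> lmeasurable" by (rule lmeasurable_compact)
  define m where "m = measure lebesgue A"
  have m0: "m \<ge> 0" unfolding m_def by simp
  have bound: "real N * m \<le> measure lebesgue B" if N: "N > 0" for N :: nat
  proof -
    define T where "T k = (+) ((real k / real N) *\<^sub>R v) ` A" for k
    have mT: "T k \<in> lmeasurable" for k unfolding T_def by (rule measurable_translation[OF mA])
    have disj: "disjoint_family_on T {..<N}"
      unfolding disjoint_family_on_def
    proof (intro ballI impI)
      fix k l assume k: "k \<in> {..<N}" and l: "l \<in> {..<N}" and kl: "k \<noteq> l"
      show "T k \<inter> T l = {}"
      proof (rule ccontr)
        assume "T k \<inter> T l \<noteq> {}"
        then obtain a b where ab: "a \<in> A" "b \<in> A"
          "(real k / real N) *\<^sub>R v + a = (real l / real N) *\<^sub>R v + b"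
          unfolding T_def by auto
        show False
        proof (cases "k < l")
          case True
          have "a = b + ((real l - real k) / real N) *\<^sub>R v"
            using ab(3) by (simp add: algebra_simps diff_divide_distrib)
          moreover have "(real l - real k) / real N > 0" using True N by simp
          ultimately show False using anti_disj[of b Z \<sigma> a] ab unfolding A_def v_def by blast
        next
          case False
          then have lk: "l < k" using kl by auto
          have "b = a + ((real k - real l) / real N) *\<^sub>R v"
            using ab(3) by (simp add: algebra_simps diff_divide_distrib)
          moreover have "(real k - real l) / real N > 0" using lk N by simp
          ultimately show False using anti_disj[of a Z \<sigma> b] ab unfolding A_def v_def by blast
        qed
      qed
    qed
    have "measure lebesgue (\<Union>k\<in>{..<N}. T k) = (\<Sum>k\<in>{..<N}. measure lebesgue (T k))"
      by (rule measure_finite_Union) (use mT disj fmeasurableD2[OF mT] in \<open>auto\<close>)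
    also have "\<dots> = real N * m" unfolding T_def m_def measure_translation by simp
    finally have eq: "measure lebesgue (\<Union>k\<in>{..<N}. T k) = real N * m" .
    have sub: "(\<Union>k\<in>{..<N}. T k) \<subseteq> B"
    proof
      fix y assume "y \<in> (\<Union>k\<in>{..<N}. T k)"
      then obtain k a where ka: "k < N" "a \<in> A" "y = (real k / real N) *\<^sub>R v + a"
        unfolding T_def by auto
      have "real k / real N \<in> {0..1}" using ka(1) N by auto
      then show "y \<in> B" unfolding B_def using ka
        by (intro image_eqI[of _ _ "(real k / real N, a)"]) (auto simp: add.commute)
    qed
    have "measure lebesgue (\<Union>k\<in>{..<N}. T k) \<le> measure lebesgue B"
      by (rule measure_mono_fmeasurable[OF sub _ mB]) (use mT in \<open>auto simp: fmeasurable_def\<close>)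
    then show ?thesis using eq by simp
  qed
  have "m = 0"
  proof (rule ccontr)
    assume "m \<noteq> 0"
    then have mp: "m > 0" using m0 by simp
    obtain N :: nat where N: "N > measure lebesgue B / m" using reals_Archimedean2 by blast
    then have "N > 0" using mp measure_nonneg[of lebesgue B]
      by (metis divide_nonneg_pos of_nat_0_less_iff order_le_less_trans)
    then have "real N * m \<le> measure lebesgue B" by (rule bound)
    moreover have "real N * m > measure lebesgue B" using N mp by (simp add: field_simps)
    ultimately show False by simp
  qed
  then show ?thesis using negligible_iff_measure0[OF mA] unfolding A_def m_def by simp
qed

theorem proposition3p4:
  fixes Z :: "(real^'n) set"
  assumes "compact Z" and "l1_convex Z"
  shows "jordan_measurable Z"
  unfolding jordan_measurable_def
proof
  show "bounded Z" using assms(1) by (rule compact_imp_bounded)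
  have "negligible (\<Union>\<sigma>. anti Z \<sigma>)"
    by (rule negligible_Union) (auto intro: anti_negl[OF assms(1)])
  then show "negligible (frontier Z)"
    using frontier_sub_anti[OF assms] negligible_subset by blast
qed

end
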